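(* Let $X,Y$ be real normed linear spaces and $Z=X\oplus_pY$ with $1<p<\infty$. Let $(x,y)\in Z\setminus\{\theta\}$, where $x$ is $\varepsilon_x$-smooth in $X$ and $y$ is $\varepsilon_y$-smooth in $Y$ for some $\varepsilon_x,\varepsilon_y\in[0,2)$. Then $(x,y)$ is $\varepsilon$-smooth in $Z$ with $\varepsilon=\max\{\varepsilon_x,\varepsilon_y\}$.
   Context: $X\oplus_pY$ is $X\times Y$ with norm $(\|x\|^p+\|y\|^p)^{1/p}$. For a normed space $W$ and $w\neq\theta$, $J(w)=\{\phi\in S_{W^*}:\phi(w)=\|w\|\}$, and $w$ is $\delta$-smooth if $\sup_{\phi,\psi\in J(w)}\|\phi-\psi\|\le\delta$ (this is only defined for $w\neq\theta$, so the hypothesis includes $x\neq\theta$ and $y\neq\theta$). *)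

theory Defs
  imports "HOL-Analysis.Analysis"
begin

text \<open>A normed space is given by a real vector space type together with a norm
  function N.  For the spaces X, Y we use N = norm; for Z = X (+)_p Y we use the
  p-norm on the product type.\<close>

definition pnorm :: "real \<Rightarrow> ('a::real_normed_vector \<times> 'b::real_normed_vector) \<Rightarrow> real" where
  "pnorm p z = (norm (fst z) powr p + norm (snd z) powr p) powr (1 / p)"

definition is_functional :: "('a::real_vector \<Rightarrow> real) \<Rightarrow> ('a \<Rightarrow> real) \<Rightarrow> bool" where
  "is_functional N f \<longleftrightarrow> linear f \<and> (\<exists>K. \<forall>v. \<bar>f v\<bar> \<le> K * N v)"

definition dnorm :: "('a::real_vector \<Rightarrow> real) \<Rightarrow> ('a \<Rightarrow> real) \<Rightarrow> real" where
  "dnorm N f = (SUP v\<in>{v. N v \<le> 1}. \<bar>f v\<bar>)"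

definition Jset :: "('a::real_vector \<Rightarrow> real) \<Rightarrow> 'a \<Rightarrow> ('a \<Rightarrow> real) set" where
  "Jset N w = {f. is_functional N f \<and> dnorm N f = 1 \<and> f w = N w}"

text \<open>w is delta-smooth: w \<noteq> 0 and sup over phi, psi in J(w) of ||phi - psi|| \<le> delta
  (a supremum is \<le> delta iff every element is).\<close>
definition delta_smooth :: "('a::real_vector \<Rightarrow> real) \<Rightarrow> 'a \<Rightarrow> real \<Rightarrow> bool" where
  "delta_smooth N w \<delta> \<longleftrightarrow> w \<noteq> 0 \<and>
     (\<forall>\<phi>\<in>Jset N w. \<forall>\<psi>\<in>Jset N w. dnorm N (\<lambda>v. \<phi> v - \<psi> v) \<le> \<delta>)"

end

theory Submission
  imports Defs
begin

lemma holder2: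
  fixes s t U V p :: real
  assumes p: "p > 1" and s: "s > 0" and t: "t > 0" and U: "U \<ge> 0" and V: "V \<ge> 0"
  shows "s powr (p-1) * U + t powr (p-1) * V \<le>
     ((s powr p + t powr p) powr (1/p)) powr (p-1) * (U powr p + V powr p) powr (1/p)"
proof -
  define N where "N = (s powr p + t powr p) powr (1/p)"
  define M where "M = (U powr p + V powr p) powr (1/p)"
  define q where "q = p/(p-1)"
  have q1: "q > 1" using p by (simp add: q_def)
  have pq: "1/p + 1/q = 1" using p by (simp add: q_def field_simps)
  have Np: "N powr p = s powr p + t powr p" using p s t
    by (simp add: N_def powr_powr)
  have Mp: "M powr p = U powr p + V powr p" using p U V
    by (simp add: M_def powr_powr)
  have Spos: "s powr p + t powr p > 0" using s t by (simp add: add_pos_pos)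
  then have Npos: "N > 0" by (simp add: N_def)
  show ?thesis
  proof (cases "M = 0")
    case True
    then have "U powr p + V powr p = 0" using Mp p by simp
    moreover have "U powr p \<ge> 0" "V powr p \<ge> 0" by auto
    ultimately have "U powr p = 0" "V powr p = 0" by linarith+
    then have "U = 0" "V = 0" by auto
    then show ?thesis by simp
  next
    case False
    then have Mpos: "M > 0" by (simp add: M_def)
    have key: "\<And>a A. a > 0 \<Longrightarrow> A \<ge> 0 \<Longrightarrow> (a/N) powr (p-1) * (A/M) \<le> a powr p / N powr p / q + A powr p / M powr p / p"
    proof -
      fix a A :: real assume a: "a > 0" and A: "A \<ge> 0"
      have "(a/N) powr (p-1) * (A/M) \<le> ((a/N) powr (p-1)) powr q / q + (A/M) powr p / p"
        by (rule Youngs_inequality[OF q1 p]) (use pq A Mpos in auto)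
      also have "((a/N) powr (p-1)) powr q = a powr p / N powr p"
        using p a Npos by (simp add: powr_powr q_def powr_divide)
      also have "(A/M) powr p = A powr p / M powr p" using A Mpos by (simp add: powr_divide)
      finally show "(a/N) powr (p-1) * (A/M) \<le> a powr p / N powr p / q + A powr p / M powr p / p" .
    qed
    have "(s/N) powr (p-1) * (U/M) + (t/N) powr (p-1) * (V/M) \<le>
       (s powr p + t powr p) / N powr p / q + (U powr p + V powr p) / M powr p / p"
      using key[OF s U] key[OF t V] by (simp add: add_divide_distrib)
    also have "\<dots> = 1/q + 1/p" using Np Mp Npos Mpos by (simp flip: Np Mp)
    also have "\<dots> = 1" using pq by simp
    finally have "(s/N) powr (p-1) * (U/M) + (t/N) powr (p-1) * (V/M) \<le> 1" .
    moreover have "(s/N) powr (p-1) * (U/M) + (t/N) powr (p-1) * (V/M) =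
        (s powr (p-1) * U + t powr (p-1) * V) / (N powr (p-1) * M)"
      using s t Npos by (simp add: powr_divide add_divide_distrib)
    ultimately have "s powr (p-1) * U + t powr (p-1) * V \<le> N powr (p-1) * M"
      using Npos Mpos by (simp add: divide_le_eq)
    then show ?thesis unfolding N_def M_def .
  qed
qed

lemma deriv_bound:
  fixes s t p c :: real
  assumes p: "p > 1" and s: "s > 0" and t: "t > 0"
    and H: "\<And>l. 0 < l \<Longrightarrow> l < 1 \<Longrightarrow>
      (s powr p + t powr p) powr (1/p) + l * c \<le> ((s+l) powr p + t powr p) powr (1/p)"
  shows "c \<le> s powr (p-1) / ((s powr p + t powr p) powr (1/p)) powr (p-1)"
proof (rule ccontr)
  define S where "S = s powr p + t powr p"
  define D where "D = s powr (p-1) / (S powr (1/p)) powr (p-1)"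
  define h where "h = (\<lambda>l. ((s+l) powr p + t powr p) powr (1/p))"
  assume "\<not> ?thesis"
  then have cD: "c > D" unfolding D_def S_def by simp
  have Spos: "S > 0" using s t by (simp add: S_def add_pos_pos)
  have "(h has_real_derivative (1/p) * ((s+0) powr p + t powr p) powr (1/p - 1) * (p * (s+0) powr (p-1) * (0+1) + 0)) (at 0)"
    unfolding h_def using s t
    by (intro derivative_intros) (auto simp: add_pos_pos)
  moreover have "(1/p) * ((s+0) powr p + t powr p) powr (1/p - 1) * (p * (s+0) powr (p-1) * (0+1) + 0) = D"
  proof -
    have "(S powr (1/p)) powr (p-1) = S powr ((p-1)/p)" by (simp add: powr_powr)
    moreover have "S powr (1/p - 1) = 1 / S powr ((p-1)/p)"
      using p by (simp add: powr_minus_divide[symmetric] diff_divide_distrib)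
    ultimately show ?thesis using p unfolding D_def S_def by simp
  qed
  ultimately have dh: "(h has_real_derivative D) (at 0)" by simp
  have "((\<lambda>l. l * c - h l) has_real_derivative (1 * c - D)) (at 0)"
    by (intro DERIV_diff DERIV_cmult_right DERIV_ident dh)
  then obtain d where d: "d > 0" and dd: "\<And>l. 0 < l \<Longrightarrow> l < d \<Longrightarrow> 0 * c - h 0 < (0 + l) * c - h (0 + l)"
    using DERIV_pos_inc_right[of "\<lambda>l. l * c - h l" "1*c - D" 0] cD by auto
  define l where "l = min (d/2) (1/2)"
  have l: "0 < l" "l < d" "l < 1" using d by (auto simp: l_def)
  have "h 0 + l * c \<le> h l" using H[OF l(1) l(3)] by (simp add: h_def)
  moreover have "0 * c - h 0 < (0 + l) * c - h (0 + l)" using dd l by auto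
  ultimately show False by simp
qed

locale nrm =
  fixes N :: "'a::real_vector \<Rightarrow> real"
  assumes hom: "\<And>c v. N (c *\<^sub>R v) = \<bar>c\<bar> * N v"
    and nn: "\<And>v. N v \<ge> 0"
    and def0: "\<And>v. N v = 0 \<Longrightarrow> v = 0"
begin

lemma N0: "N 0 = 0" using hom[of 0 0] by simp

lemma dn_bdd: assumes "is_functional N h"
  shows "bdd_above ((\<lambda>v. \<bar>h v\<bar>) ` {v. N v \<le> 1})"
proof -
  obtain K where K: "\<And>v. \<bar>h v\<bar> \<le> K * N v" using assms unfolding is_functional_def by blast
  have "\<bar>h v\<bar> \<le> \<bar>K\<bar>" if "N v \<le> 1" for v
  proof -
    have "K * N v \<le> \<bar>K\<bar> * N v" using nn[of v] by (simp add: mult_right_mono)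
    also have "\<dots> \<le> \<bar>K\<bar>" using that nn[of v] by (simp add: mult_left_le)
    finally show ?thesis using K[of v] by linarith
  qed
  then show ?thesis by (intro bdd_aboveI[where M="\<bar>K\<bar>"]) auto
qed

lemma dn_upper: assumes "is_functional N h" "N v \<le> 1"
  shows "\<bar>h v\<bar> \<le> dnorm N h"
  unfolding dnorm_def using assms dn_bdd[OF assms(1)] by (auto intro: cSUP_upper)

lemma dn_le: assumes "\<And>v. N v \<le> 1 \<Longrightarrow> \<bar>h v\<bar> \<le> c"
  shows "dnorm N h \<le> c"
  unfolding dnorm_def
proof (rule cSUP_least)
  have "N 0 \<le> 1" using N0 by simp
  then show "{v. N v \<le> 1} \<noteq> {}" by blast
qed (use assms in auto)

lemma scale_bound: assumes "linear h" "\<And>v. N v \<le> 1 \<Longrightarrow> \<bar>h v\<bar> \<le> c"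
  shows "\<bar>h v\<bar> \<le> c * N v"
proof (cases "N v = 0")
  case True
  then have "v = 0" by (rule def0)
  then show ?thesis using True linear_0[OF assms(1)] by simp
next
  case False
  then have pos: "N v > 0" using nn[of v] by linarith
  define w where "w = (1 / N v) *\<^sub>R v"
  have "N w = 1" using pos by (simp add: w_def hom)
  then have "\<bar>h w\<bar> \<le> c" using assms(2) by simp
  moreover have "h w = h v / N v" using linear_scale[OF assms(1)] by (simp add: w_def)
  ultimately show ?thesis using pos by (simp add: abs_div pos_divide_le_eq)
qed

lemma dn_scale: assumes "is_functional N h"
  shows "\<bar>h v\<bar> \<le> dnorm N h * N v"
proof (rule scale_bound)
  show "linear h" using assms by (simp add: is_functional_def)
  fix v assume "N v \<le> 1" then show "\<bar>h v\<bar> \<le> dnorm N h" by (rule dn_upper[OF assms])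
qed

end

lemma nrm_norm: "nrm (norm :: 'a::real_normed_vector \<Rightarrow> real)"
  by unfold_locales auto

lemma pnorm_pair: "pnorm p (u, v) = (norm u powr p + norm v powr p) powr (1/p)"
  by (simp add: pnorm_def)

lemma nrm_pnorm: assumes "p > 0"
  shows "nrm (pnorm p :: ('a::real_normed_vector \<times> 'b::real_normed_vector) \<Rightarrow> real)"
proof
  fix c :: real and v :: "'a \<times> 'b"
  obtain u w where v: "v = (u, w)" by (cases v)
  have "(\<bar>c\<bar> * norm u) powr p + (\<bar>c\<bar> * norm w) powr p = \<bar>c\<bar> powr p * (norm u powr p + norm w powr p)"
    by (simp add: powr_mult distrib_left)
  moreover have "(\<bar>c\<bar> powr p * X) powr (1/p) = \<bar>c\<bar> * X powr (1/p)" if "X \<ge> 0" for X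
    using that assms by (simp add: powr_mult powr_powr)
  ultimately show "pnorm p (c *\<^sub>R v) = \<bar>c\<bar> * pnorm p v"
    by (simp add: v pnorm_pair)
next
  fix v :: "'a \<times> 'b"
  show "pnorm p v \<ge> 0" by (simp add: pnorm_def)
next
  fix v :: "'a \<times> 'b"
  assume "pnorm p v = 0"
  then have "norm (fst v) powr p + norm (snd v) powr p = 0" by (simp add: pnorm_def)
  moreover have "norm (fst v) powr p \<ge> 0" "norm (snd v) powr p \<ge> 0" by auto
  ultimately have "norm (fst v) powr p = 0" "norm (snd v) powr p = 0" by linarith+
  then have "fst v = 0" "snd v = 0" by (auto simp: powr_eq_0_iff)
  then show "v = 0" by (intro prod_eqI) auto
qed

lemma comp_J:
  fixes g :: "'a::real_normed_vector \<Rightarrow> real"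
  assumes lin: "linear g" and a: "a > 0" and bd: "\<And>u. norm u \<le> 1 \<Longrightarrow> \<bar>g u\<bar> \<le> a"
    and gx: "g x = a * norm x" and x: "x \<noteq> 0"
  shows "(\<lambda>u. g u / a) \<in> Jset norm x"
proof -
  interpret nrm "norm :: 'a \<Rightarrow> real" by (rule nrm_norm)
  have lin2: "linear (\<lambda>u. g u / a)"
    by (rule linearI) (simp_all add: linear_add[OF lin] linear_scale[OF lin] add_divide_distrib)
  have b1: "\<And>u. norm u \<le> 1 \<Longrightarrow> \<bar>g u / a\<bar> \<le> 1" using bd a by (simp add: abs_div)
  have isf: "is_functional norm (\<lambda>u. g u / a)"
    unfolding is_functional_def using lin2 scale_bound[OF lin2 b1] by blast
  have "dnorm norm (\<lambda>u. g u / a) \<le> 1" by (rule dn_le) (rule b1)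
  moreover have "1 \<le> dnorm norm (\<lambda>u. g u / a)"
  proof -
    define w where "w = (1 / norm x) *\<^sub>R x"
    have "norm w = 1" using x by (simp add: w_def)
    then have "\<bar>g w / a\<bar> \<le> dnorm norm (\<lambda>u. g u / a)" using dn_upper[OF isf] by simp
    moreover have "g w = a" using linear_scale[OF lin] x gx by (simp add: w_def)
    ultimately show ?thesis using a by simp
  qed
  ultimately show ?thesis unfolding Jset_def using isf gx a by auto
qed

theorem theorem6p2:
  fixes x :: "'a::real_normed_vector" and y :: "'b::real_normed_vector"
    and p \<epsilon>x \<epsilon>y :: real
  assumes "1 < p"
    and "0 \<le> \<epsilon>x" and "\<epsilon>x < 2" and "0 \<le> \<epsilon>y" and "\<epsilon>y < 2"
    and "delta_smooth norm x \<epsilon>x"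
    and "delta_smooth norm y \<epsilon>y"
  shows "delta_smooth (pnorm p) (x, y) (max \<epsilon>x \<epsilon>y)"
proof -
  have p: "p > 1" using assms(1) .
  have x0: "x \<noteq> 0" and y0: "y \<noteq> 0" using assms(6,7) by (auto simp: delta_smooth_def)
  interpret Z: nrm "pnorm p :: 'a \<times> 'b \<Rightarrow> real" by (rule nrm_pnorm) (use p in simp)
  interpret X: nrm "norm :: 'a \<Rightarrow> real" by (rule nrm_norm)
  interpret Y: nrm "norm :: 'b \<Rightarrow> real" by (rule nrm_norm)
  define s where "s = norm x"
  define t where "t = norm y"
  define Nz where "Nz = (s powr p + t powr p) powr (1/p)"
  define a where "a = s powr (p-1) / Nz powr (p-1)"
  define b where "b = t powr (p-1) / Nz powr (p-1)"
  have s: "s > 0" using x0 by (simp add: s_def)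
  have t: "t > 0" using y0 by (simp add: t_def)
  have Spos: "s powr p + t powr p > 0" using s t by (simp add: add_pos_pos)
  then have Nzpos: "Nz > 0" by (simp add: Nz_def)
  have a: "a > 0" using s Nzpos by (simp add: a_def)
  have b: "b > 0" using t Nzpos by (simp add: b_def)
  have NzP: "Nz powr p = s powr p + t powr p" using p Spos by (simp add: Nz_def powr_powr)
  have abN: "a * s + b * t = Nz"
  proof -
    have "s powr (p-1) * s = s powr p" using s powr_add[of s "p-1" 1] by simp
    moreover have "t powr (p-1) * t = t powr p" using t powr_add[of t "p-1" 1] by simp
    moreover have "Nz powr p / Nz powr (p-1) = Nz" using Nzpos by (simp add: powr_diff[symmetric])
    ultimately show ?thesis unfolding a_def b_def using NzP
      by (simp add: add_divide_distrib[symmetric] mult.commute)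
  qed
  have decomp: "\<exists>f g. f \<in> Jset norm x \<and> g \<in> Jset norm y \<and> (\<forall>u v. \<phi> (u,v) = a * f u + b * g v)"
    if \<phi>: "\<phi> \<in> Jset (pnorm p) (x,y)" for \<phi>
  proof -
    have isf: "is_functional (pnorm p) \<phi>" and dn1: "dnorm (pnorm p) \<phi> = 1"
      and \<phi>xy: "\<phi> (x,y) = Nz"
      using \<phi> by (auto simp: Jset_def pnorm_pair Nz_def s_def t_def)
    have lin: "linear \<phi>" using isf by (simp add: is_functional_def)
    have bd: "\<And>z. \<bar>\<phi> z\<bar> \<le> pnorm p z" using Z.dn_scale[OF isf] dn1 by simp
    have split: "\<phi> (u,v) = \<phi> (u,0) + \<phi> (0,v)" for u v
      using linear_add[OF lin, of "(u,0)" "(0,v)"] by simp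
    have sc: "\<phi> (c *\<^sub>R z) = c * \<phi> z" for c z using linear_scale[OF lin] by simp
    have addz: "\<phi> (z + w) = \<phi> z + \<phi> w" for z w using linear_add[OF lin] by simp
    have linx: "linear (\<lambda>u. \<phi> (u, 0))"
      by (rule linearI) (simp_all add: addz[symmetric] sc[symmetric])
    have liny: "linear (\<lambda>v. \<phi> (0, v))"
      by (rule linearI) (simp_all add: addz[symmetric] sc[symmetric])
    have bx: "\<phi> (u,0) \<le> a" if u: "norm u \<le> 1" for u
      unfolding a_def Nz_def
    proof (rule deriv_bound[OF p s t])
      fix l :: real assume l: "0 < l" "l < 1"
      have "(s powr p + t powr p) powr (1/p) + l * \<phi> (u,0) = \<phi> (x,y) + l * \<phi> (u,0)"
        using \<phi>xy by (simp add: Nz_def add.commute)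
      also have "\<dots> = \<phi> ((x,y) + l *\<^sub>R (u,0))" by (simp only: addz sc)
      also have "\<dots> \<le> pnorm p ((x,y) + l *\<^sub>R (u,0))" using bd abs_le_D1 by blast
      also have "pnorm p ((x,y) + l *\<^sub>R (u,0)) = pnorm p (x + l *\<^sub>R u, y)" by simp
      also have "\<dots> \<le> ((s + l) powr p + t powr p) powr (1/p)"
      proof -
        have "norm (x + l *\<^sub>R u) \<le> s + l"
          using norm_triangle_ineq[of x "l *\<^sub>R u"] u l by (simp add: s_def) (smt (verit) mult_left_le)
        then have "norm (x + l *\<^sub>R u) powr p \<le> (s + l) powr p" using p by (intro powr_mono2) auto
        then show ?thesis unfolding pnorm_pair t_def using p by (intro powr_mono2) auto
      qed
      finally show "(s powr p + t powr p) powr (1/p) + l * \<phi> (u,0) \<le> ((s + l) powr p + t powr p) powr (1/p)" .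
    qed
    have by': "\<phi> (0,v) \<le> b" if v: "norm v \<le> 1" for v
    proof -
      have "\<phi> (0,v) \<le> t powr (p-1) / ((t powr p + s powr p) powr (1/p)) powr (p-1)"
      proof (rule deriv_bound[OF p t s])
        fix l :: real assume l: "0 < l" "l < 1"
        have "(t powr p + s powr p) powr (1/p) + l * \<phi> (0,v) = \<phi> (x,y) + l * \<phi> (0,v)"
        using \<phi>xy by (simp add: Nz_def add.commute)
      also have "\<dots> = \<phi> ((x,y) + l *\<^sub>R (0,v))" by (simp only: addz sc)
      also have "\<dots> \<le> pnorm p ((x,y) + l *\<^sub>R (0,v))" using bd abs_le_D1 by blast
      also have "pnorm p ((x,y) + l *\<^sub>R (0,v)) = pnorm p (x, y + l *\<^sub>R v)" by simp
        also have "\<dots> \<le> ((t + l) powr p + s powr p) powr (1/p)"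
        proof -
          have "norm (y + l *\<^sub>R v) \<le> t + l"
            using norm_triangle_ineq[of y "l *\<^sub>R v"] v l by (simp add: t_def) (smt (verit) mult_left_le)
          then have "norm (y + l *\<^sub>R v) powr p \<le> (t + l) powr p" using p by (intro powr_mono2) auto
          then show ?thesis unfolding pnorm_pair s_def using p by (intro powr_mono2) auto
        qed
        finally show "(t powr p + s powr p) powr (1/p) + l * \<phi> (0,v) \<le> ((t + l) powr p + s powr p) powr (1/p)" .
      qed
      then show ?thesis by (simp add: b_def Nz_def add.commute)
    qed
    have absx: "\<bar>\<phi> (u,0)\<bar> \<le> a" if "norm u \<le> 1" for u
    proof -
      have "\<phi> (-u,0) = - \<phi> (u,0)" using sc[of "-1" "(u,0)"] by simp
      then show ?thesis using bx[of u] bx[of "-u"] that by simp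
    qed
    have absy: "\<bar>\<phi> (0,v)\<bar> \<le> b" if "norm v \<le> 1" for v
    proof -
      have "\<phi> (0,-v) = - \<phi> (0,v)" using sc[of "-1" "(0,v)"] by simp
      then show ?thesis using by'[of v] by'[of "-v"] that by simp
    qed
    have "\<bar>\<phi> (x,0)\<bar> \<le> a * s" using X.scale_bound[OF linx absx] by (simp add: s_def)
    moreover have "\<bar>\<phi> (0,y)\<bar> \<le> b * t" using Y.scale_bound[OF liny absy] by (simp add: t_def)
    moreover have "\<phi> (x,0) + \<phi> (0,y) = a * s + b * t" using split[of x y] \<phi>xy abN by simp
    ultimately have ex: "\<phi> (x,0) = a * norm x" and ey: "\<phi> (0,y) = b * norm y"
      by (auto simp: s_def t_def)
    have f: "(\<lambda>u. \<phi> (u,0) / a) \<in> Jset norm x" by (rule comp_J[OF linx a absx ex x0])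
    have g: "(\<lambda>v. \<phi> (0,v) / b) \<in> Jset norm y" by (rule comp_J[OF liny b absy ey y0])
    have "\<forall>u v. \<phi> (u,v) = a * (\<phi> (u,0) / a) + b * (\<phi> (0,v) / b)"
    proof (intro allI)
      fix u v show "\<phi> (u,v) = a * (\<phi> (u,0) / a) + b * (\<phi> (0,v) / b)"
        using split[of u v] a b by simp
    qed
    with f g show ?thesis by blast
  qed
  have hol: "a * norm u + b * norm v \<le> pnorm p (u,v)" for u :: 'a and v :: 'b
  proof -
    have "s powr (p-1) * norm u + t powr (p-1) * norm v \<le> Nz powr (p-1) * pnorm p (u,v)"
      using holder2[OF p s t norm_ge_zero norm_ge_zero] by (simp add: Nz_def pnorm_pair)
    then show ?thesis using Nzpos unfolding a_def b_def
      by (simp add: add_divide_distrib[symmetric] mult.commute divide_le_eq)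
  qed
  have diffb: "\<bar>f1 u - f2 u\<bar> \<le> e * norm u"
    if "f1 \<in> Jset norm w" "f2 \<in> Jset norm w" "delta_smooth norm w e" for f1 f2 :: "'c::real_normed_vector \<Rightarrow> real" and w u e
  proof -
    interpret W: nrm "norm :: 'c \<Rightarrow> real" by (rule nrm_norm)
    have i1: "is_functional norm f1" "dnorm norm f1 = 1" and i2: "is_functional norm f2" "dnorm norm f2 = 1"
      using that by (auto simp: Jset_def)
    have lin: "linear (\<lambda>u. f1 u - f2 u)"
      using i1 i2 by (intro linear_compose_sub) (auto simp: is_functional_def)
    have "\<bar>f1 u - f2 u\<bar> \<le> 2 * norm u" for u
      using W.dn_scale[OF i1(1), of u] W.dn_scale[OF i2(1), of u] i1 i2 by simp
    then have isf: "is_functional norm (\<lambda>u. f1 u - f2 u)" using lin unfolding is_functional_def by blast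
    have "dnorm norm (\<lambda>u. f1 u - f2 u) \<le> e" using that by (auto simp: delta_smooth_def)
    then show ?thesis using W.dn_scale[OF isf, of u]
      by (smt (verit) mult_right_mono norm_ge_zero)
  qed
  show ?thesis
    unfolding delta_smooth_def
  proof (intro conjI ballI)
    show "(x, y) \<noteq> 0" using x0 by (simp add: zero_prod_def)
    fix \<phi> \<psi> assume \<phi>: "\<phi> \<in> Jset (pnorm p) (x, y)" and \<psi>: "\<psi> \<in> Jset (pnorm p) (x, y)"
    obtain f1 g1 where f1: "f1 \<in> Jset norm x" and g1: "g1 \<in> Jset norm y" and e1: "\<forall>u v. \<phi> (u,v) = a * f1 u + b * g1 v"
      using decomp[OF \<phi>] by blast
    obtain f2 g2 where f2: "f2 \<in> Jset norm x" and g2: "g2 \<in> Jset norm y" and e2: "\<forall>u v. \<psi> (u,v) = a * f2 u + b * g2 v"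
      using decomp[OF \<psi>] by blast
    show "dnorm (pnorm p) (\<lambda>v. \<phi> v - \<psi> v) \<le> max \<epsilon>x \<epsilon>y"
    proof (rule Z.dn_le)
      fix z :: "'a \<times> 'b" assume z: "pnorm p z \<le> 1"
      obtain u v where zuv: "z = (u,v)" by (cases z)
      let ?e = "max \<epsilon>x \<epsilon>y"
      have "\<bar>\<phi> z - \<psi> z\<bar> = \<bar>a * (f1 u - f2 u) + b * (g1 v - g2 v)\<bar>"
        using e1 e2 by (simp add: zuv algebra_simps)
      also have "\<dots> \<le> a * \<bar>f1 u - f2 u\<bar> + b * \<bar>g1 v - g2 v\<bar>"
        using a b abs_triangle_ineq[of "a * (f1 u - f2 u)" "b * (g1 v - g2 v)"] by (simp add: abs_mult)
      also have "\<dots> \<le> a * (?e * norm u) + b * (?e * norm v)"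
      proof (intro add_mono mult_left_mono)
        have "\<bar>f1 u - f2 u\<bar> \<le> \<epsilon>x * norm u" by (rule diffb[OF f1 f2 assms(6)])
        also have "\<dots> \<le> ?e * norm u" by (intro mult_right_mono) auto
        finally show "\<bar>f1 u - f2 u\<bar> \<le> ?e * norm u" .
        have "\<bar>g1 v - g2 v\<bar> \<le> \<epsilon>y * norm v" by (rule diffb[OF g1 g2 assms(7)])
        also have "\<dots> \<le> ?e * norm v" by (intro mult_right_mono) auto
        finally show "\<bar>g1 v - g2 v\<bar> \<le> ?e * norm v" .
      qed (use a b in auto)
      also have "\<dots> = ?e * (a * norm u + b * norm v)" by (simp add: algebra_simps)
      also have "\<dots> \<le> ?e * pnorm p (u,v)" using hol assms(2) by (intro mult_left_mono) auto
      also have "\<dots> \<le> ?e" using z zuv assms(2) by (simp add: mult_left_le)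
      finally show "\<bar>\<phi> z - \<psi> z\<bar> \<le> ?e" .
    qed
  qed
qed

end
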